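(* Let $n\ge 2$, $a>1$, $p,q\in\mathbb{R}$, and let $f_t(x)$, $(t,x)\in[0,T)\times[1,a]$, be a solution of $$\dot f=u''(x)\left(\frac{f''}{1+f'^2}+(n-1)\frac{xf'-f}{x^2+f^2}\right),\qquad f_t(1)=q,\ f_t(a)=p.$$ Then there exist uniform constants $A,B$ (independent of $t$) such that $$|f_t'(1)|+|f_t'(a)|\leq Ae^{Bt}\quad\text{for all }t\in[0,T).$$
   Context: Setting: $X$ is the blowup of $\mathbb{P}^n$ at a point, $\omega=i\partial\bar\partial u(\rho)$ a Calabi-symmetric K\"ahler form in the class $a[H]-[E]$ ($\rho=\log|z|^2$ on $\mathbb{C}^n\setminus\{0\}$, $u'>0,u''>0$, with $u(\log r)-\log r$ and $u(-\log r)+a\log r$ smooth up to $r=0$ with positive derivative there). In the Legendre coordinate $x=u'(\rho)\in[1,a]$, $u''$ is a smooth function of $x$ on $[1,a]$, positive on $(1,a)$, vanishing linearly at $x=1$ and $x=a$. A Calabi-symmetric form $\alpha=i\partial\bar\partial v(\rho)$ in $p[H]-q[E]$ corresponds to $f(x)=v'(\rho)$ with $f(1)=q$, $f(a)=p$; the line bundle mean curvature flow becomes the displayed equation for $f$. *)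

theory Defs
  imports "HOL-Analysis.Analysis" "HOL-Library.Extended_Real"
begin

definition flow_dom :: "ereal \<Rightarrow> real \<Rightarrow> (real \<times> real) set" where
  "flow_dom T a = {(t, x). 0 \<le> t \<and> ereal t < T \<and> 1 \<le> x \<and> x \<le> a}"

text \<open>The function w(x) = u''(x) in the Legendre coordinate x in [1,a]:
  continuously differentiable on [1,a], positive on (1,a), vanishing linearly at 1 and a.\<close>
definition legendre_weight :: "real \<Rightarrow> (real \<Rightarrow> real) \<Rightarrow> (real \<Rightarrow> real) \<Rightarrow> bool" where
  "legendre_weight a w w' \<longleftrightarrow>
     (\<forall>x\<in>{1..a}. (w has_real_derivative w' x) (at x within {1..a})) \<and>
     continuous_on {1..a} w' \<and>
     (\<forall>x\<in>{1<..<a}. w x > 0) \<and>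
     w 1 = 0 \<and> w a = 0 \<and> w' 1 \<noteq> 0 \<and> w' a \<noteq> 0"

definition lbmcf_solution ::
  "nat \<Rightarrow> real \<Rightarrow> (real \<Rightarrow> real) \<Rightarrow> real \<Rightarrow> real \<Rightarrow> ereal \<Rightarrow>
   (real \<Rightarrow> real \<Rightarrow> real) \<Rightarrow> (real \<Rightarrow> real \<Rightarrow> real) \<Rightarrow> (real \<Rightarrow> real \<Rightarrow> real) \<Rightarrow>
   (real \<Rightarrow> real \<Rightarrow> real) \<Rightarrow> bool" where
  "lbmcf_solution n a w p q T f fx fxx ft \<longleftrightarrow>
     (\<forall>(t, x)\<in>flow_dom T a.
        ((\<lambda>y. f t y) has_real_derivative fx t x) (at x within {1..a}) \<and>
        ((\<lambda>y. fx t y) has_real_derivative fxx t x) (at x within {1..a}) \<and>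
        ((\<lambda>s. f s x) has_real_derivative ft t x) (at t within {s. 0 \<le> s \<and> ereal s < T}) \<and>
        ft t x = w x * (fxx t x / (1 + (fx t x)\<^sup>2)
                        + (real n - 1) * (x * fx t x - f t x) / (x\<^sup>2 + (f t x)\<^sup>2))) \<and>
     continuous_on (flow_dom T a) (\<lambda>(t, x). f t x) \<and>
     continuous_on (flow_dom T a) (\<lambda>(t, x). fx t x) \<and>
     continuous_on (flow_dom T a) (\<lambda>(t, x). fxx t x) \<and>
     continuous_on (flow_dom T a) (\<lambda>(t, x). ft t x) \<and>
     (\<forall>t. 0 \<le> t \<and> ereal t < T \<longrightarrow> f t 1 = q \<and> f t a = p)"

end

theory Submission
  imports Defs
begin

lemma lip_bound:
  fixes g g' :: "real \<Rightarrow> real"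
  assumes der: "\<And>x. x \<in> {lo..hi} \<Longrightarrow> (g has_real_derivative g' x) (at x within {lo..hi})"
    and bd: "\<And>x. x \<in> {lo..hi} \<Longrightarrow> \<bar>g' x\<bar> \<le> M"
    and uv: "lo \<le> u" "u \<le> v" "v \<le> hi"
  shows "\<bar>g v - g u\<bar> \<le> M * (v - u)"
proof (cases "u = v")
  case True then show ?thesis by simp
next
  case False
  then have lt: "u < v" using uv by simp
  have "continuous_on {lo..hi} g"
    using der by (rule DERIV_continuous_on)
  then have c: "continuous_on {u..v} g"
    by (rule continuous_on_subset) (use uv in auto)
  have dat: "(g has_real_derivative g' x) (at x)" if "lo < x" "x < hi" for x
  proof -
    have "at x within {lo..hi} = at x"
      by (rule at_within_open_subset[of _ "{lo<..<hi}"]) (use that in auto)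
    with der[of x] that show ?thesis by simp
  qed
  obtain l z where z: "u < z" "z < v" "DERIV g z :> l" "g v - g u = (v - u) * l"
    using MVT[OF lt c] dat uv by (metis less_le_trans le_less_trans real_differentiable_def)
  have "l = g' z" using dat[of z] z uv DERIV_unique by force
  then have "\<bar>l\<bar> \<le> M" using bd[of z] z uv by auto
  then show ?thesis using z(4) lt
    by (simp add: abs_mult mult.commute mult_right_mono)
qed

lemma endpoint_right:
  fixes g :: "real \<Rightarrow> real"
  assumes der: "(g has_real_derivative D) (at lo within {lo..hi})" and lt: "lo < hi"
    and bd: "\<And>x. lo < x \<Longrightarrow> x \<le> hi \<Longrightarrow> \<bar>g x - g lo\<bar> \<le> M * (x - lo)"
  shows "\<bar>D\<bar> \<le> M"
proof -
  have t: "((\<lambda>y. (g y - g lo) / (y - lo)) \<longlongrightarrow> D) (at_right lo)"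
    using der lt by (simp add: has_field_derivative_iff at_within_Icc_at_right)
  then have t2: "((\<lambda>y. \<bar>(g y - g lo) / (y - lo)\<bar>) \<longlongrightarrow> \<bar>D\<bar>) (at_right lo)"
    by (rule tendsto_rabs)
  have ev: "eventually (\<lambda>y. \<bar>(g y - g lo) / (y - lo)\<bar> \<le> M) (at_right lo)"
    unfolding eventually_at_right_field
  proof (intro exI[of _ hi] conjI allI impI)
    fix y assume "lo < y" "y < hi"
    then show "\<bar>(g y - g lo) / (y - lo)\<bar> \<le> M"
      using bd[of y] by (simp add: abs_div pos_divide_le_eq)
  qed (use lt in auto)
  show ?thesis by (rule tendsto_upperbound[OF t2 ev]) simp
qed

lemma endpoint_left:
  fixes g :: "real \<Rightarrow> real"
  assumes der: "(g has_real_derivative D) (at hi within {lo..hi})" and lt: "lo < hi"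
    and bd: "\<And>x. lo \<le> x \<Longrightarrow> x < hi \<Longrightarrow> \<bar>g x - g hi\<bar> \<le> M * (hi - x)"
  shows "\<bar>D\<bar> \<le> M"
proof -
  have t: "((\<lambda>y. (g y - g hi) / (y - hi)) \<longlongrightarrow> D) (at_left hi)"
    using der lt by (simp add: has_field_derivative_iff at_within_Icc_at_left)
  then have t2: "((\<lambda>y. \<bar>(g y - g hi) / (y - hi)\<bar>) \<longlongrightarrow> \<bar>D\<bar>) (at_left hi)"
    by (rule tendsto_rabs)
  have ev: "eventually (\<lambda>y. \<bar>(g y - g hi) / (y - hi)\<bar> \<le> M) (at_left hi)"
    unfolding eventually_at_left_field
  proof (intro exI[of _ lo] conjI allI impI)
    fix y assume "lo < y" "y < hi"
    then show "\<bar>(g y - g hi) / (y - hi)\<bar> \<le> M"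
      using bd[of y] by (simp add: abs_div pos_divide_le_eq abs_minus_commute)
  qed (use lt in auto)
  show ?thesis by (rule tendsto_upperbound[OF t2 ev]) simp
qed

lemma frac_bound:
  fixes x u v :: real
  assumes "x \<ge> 1"
  shows "(x * u - v) / (x\<^sup>2 + v\<^sup>2) \<le> \<bar>u\<bar> + 1"
proof -
  have pos: "x\<^sup>2 + v\<^sup>2 > 0" using assms by (smt (verit) one_le_power zero_le_power2)
  have "0 \<le> (\<bar>v\<bar> - 1)\<^sup>2" by simp
  then have "\<bar>v\<bar> \<le> 1 + v\<^sup>2" by (simp add: power2_eq_square algebra_simps abs_mult_self_eq)
  have "x * u - v \<le> x * \<bar>u\<bar> + \<bar>v\<bar>" using assms by (smt (verit) abs_ge_self mult_left_mono)
  also have "\<dots> \<le> (\<bar>u\<bar> + 1) * (x\<^sup>2 + v\<^sup>2)"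
  proof -
    have "x * \<bar>u\<bar> \<le> \<bar>u\<bar> * x\<^sup>2" using assms
      by (simp add: power2_eq_square) (metis abs_ge_zero mult.right_neutral mult_left_mono)
    moreover have "x\<^sup>2 \<ge> 1" using assms by (simp add: one_le_power)
    moreover have "\<bar>u\<bar> * v\<^sup>2 \<ge> 0" by simp
    moreover have "\<bar>v\<bar> \<le> x\<^sup>2 + v\<^sup>2" using \<open>\<bar>v\<bar> \<le> 1 + v\<^sup>2\<close> \<open>x\<^sup>2 \<ge> 1\<close> by linarith
    moreover have "(\<bar>u\<bar> + 1) * (x\<^sup>2 + v\<^sup>2) = \<bar>u\<bar> * x\<^sup>2 + \<bar>u\<bar> * v\<^sup>2 + x\<^sup>2 + v\<^sup>2"
      by (simp add: algebra_simps)
    ultimately show ?thesis by linarith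
  qed
  finally show ?thesis using pos by (simp add: divide_le_eq)
qed


lemma core:
  fixes g gx gxx gt :: "real \<Rightarrow> real \<Rightarrow> real" and w d :: "real \<Rightarrow> real" and T :: ereal
  assumes a1: "a > 1" and t1: "0 \<le> t1" "ereal t1 < T"
    and deriv: "\<And>t x. 0 \<le> t \<Longrightarrow> ereal t < T \<Longrightarrow> 1 \<le> x \<Longrightarrow> x \<le> a \<Longrightarrow>
        ((\<lambda>y. g t y) has_real_derivative gx t x) (at x within {1..a}) \<and>
        ((\<lambda>y. gx t y) has_real_derivative gxx t x) (at x within {1..a}) \<and>
        ((\<lambda>s. g s x) has_real_derivative gt t x) (at t within {s. 0 \<le> s \<and> ereal s < T}) \<and>
        gt t x = w x * (gxx t x / (1 + (gx t x)\<^sup>2)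
                        + (real n - 1) * (x * gx t x - g t x) / (x\<^sup>2 + (g t x)\<^sup>2))"
    and cont: "continuous_on (flow_dom T a) (\<lambda>(t, x). g t x)"
    and n: "n \<ge> 1"
    and wpos: "\<And>x. 1 < x \<Longrightarrow> x < a \<Longrightarrow> w x > 0"
    and wle: "\<And>x. 1 < x \<Longrightarrow> x < a \<Longrightarrow> w x \<le> C * d x"
    and dpos: "\<And>x. 1 < x \<Longrightarrow> x < a \<Longrightarrow> d x > 0"
    and dder: "\<And>x. (d has_real_derivative e) (at x)"
    and e: "\<bar>e\<bar> \<le> 1"
    and K: "K \<ge> 1" and C: "C \<ge> 0" and B: "B = 2 * C * (real n - 1) + 1"
    and bd1: "\<And>t. 0 \<le> t \<Longrightarrow> t \<le> t1 \<Longrightarrow> g t 1 \<le> c + K * exp (B * t) * d 1"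
    and bda: "\<And>t. 0 \<le> t \<Longrightarrow> t \<le> t1 \<Longrightarrow> g t a \<le> c + K * exp (B * t) * d a"
    and init: "\<And>x. 1 \<le> x \<Longrightarrow> x \<le> a \<Longrightarrow> g 0 x \<le> c + K * d x"
    and x: "1 \<le> x" "x \<le> a"
  shows "g t1 x \<le> c + K * exp (B * t1) * d x"
proof -
  define D where "D = {0..t1} \<times> {1..a}"
  define h where "h = (\<lambda>z::real\<times>real. g (fst z) (snd z) - (c + K * exp (B * fst z) * d (snd z)))"
  have Dsub: "D \<subseteq> flow_dom T a"
    using t1 by (auto simp: D_def flow_dom_def) (meson ereal_less_eq(3) order_le_less_trans)
  have "continuous_on D (\<lambda>z. g (fst z) (snd z))"
    using continuous_on_subset[OF cont Dsub] by (simp add: case_prod_beta')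
  moreover have "continuous_on D (\<lambda>z. c + K * exp (B * fst z) * d (snd z))"
  proof -
    have "continuous_on UNIV d" using dder
      by (meson DERIV_isCont continuous_at_imp_continuous_on)
    then have "continuous_on D (\<lambda>z. d (snd z))"
      by (rule continuous_on_compose2) (auto intro: continuous_on_snd continuous_on_id)
    then show ?thesis by (intro continuous_intros)
  qed
  ultimately have hc: "continuous_on D h" unfolding h_def by (rule continuous_on_diff)
  have "compact D" unfolding D_def by (intro compact_Times compact_Icc)
  moreover have "D \<noteq> {}" using t1 a1 by (auto simp: D_def)
  ultimately obtain z0 where z0: "z0 \<in> D" and zmax: "\<And>z. z \<in> D \<Longrightarrow> h z \<le> h z0"
    using continuous_attains_sup[OF _ _ hc] by blast
  obtain t0 x0 where z0eq: "z0 = (t0, x0)" by (cases z0)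
  have hz0: "h z0 \<le> 0"
  proof (rule ccontr)
    assume "\<not> h z0 \<le> 0"
    then have hpos: "h z0 > 0" by simp
    have t0r: "0 \<le> t0" "t0 \<le> t1" and x0r: "1 \<le> x0" "x0 \<le> a" using z0 z0eq by (auto simp: D_def)
    have "x0 \<noteq> 1" using bd1[OF t0r] hpos z0eq by (auto simp: h_def)
    moreover have "x0 \<noteq> a" using bda[OF t0r] hpos z0eq by (auto simp: h_def)
    moreover have "t0 \<noteq> 0" using init[OF x0r] hpos z0eq by (auto simp: h_def)
    ultimately have x0i: "1 < x0" "x0 < a" and t0p: "0 < t0" using x0r t0r by auto
    define E where "E = exp (B * t0)"
    have E1: "E \<ge> 1" unfolding E_def using B C n t0r
      by (simp add: one_le_exp_iff)
    have t0T: "ereal t0 < T" using t0r t1 by (meson ereal_less_eq(3) order_le_less_trans)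
    have hmax: "\<And>s y. 0 \<le> s \<Longrightarrow> s \<le> t1 \<Longrightarrow> 1 \<le> y \<Longrightarrow> y \<le> a \<Longrightarrow>
        g s y - (c + K * exp (B * s) * d y) \<le> g t0 x0 - (c + K * E * d x0)"
      using zmax z0eq unfolding h_def D_def E_def by fastforce
    have datx: "((\<lambda>y. g t0 y) has_real_derivative gx t0 y) (at y) \<and>
                ((\<lambda>y. gx t0 y) has_real_derivative gxx t0 y) (at y)" if "1 < y" "y < a" for y
    proof -
      have "at y within {1..a} = at y"
        by (rule at_within_open_subset[of _ "{1<..<a}"]) (use that in auto)
      with deriv[OF t0r(1) t0T, of y] that show ?thesis by simp
    qed
    define psi where "psi = (\<lambda>y. g t0 y - (c + K * E * d y))"
    have psider: "(psi has_real_derivative (gx t0 y - K * E * e)) (at y)" if "1 < y" "y < a" for y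
      unfolding psi_def using datx[OF that] dder[of y]
      by (auto intro!: derivative_eq_intros)
    have psimax: "\<And>y. 1 \<le> y \<Longrightarrow> y \<le> a \<Longrightarrow> psi y \<le> psi x0"
      using hmax t0r unfolding psi_def E_def by auto
    have gx0: "gx t0 x0 = K * E * e"
    proof -
      have "gx t0 x0 - K * E * e = 0"
      proof (rule DERIV_local_max[OF psider[OF x0i]])
        show "0 < min (x0 - 1) (a - x0)" using x0i by simp
        show "\<forall>y. \<bar>x0 - y\<bar> < min (x0 - 1) (a - x0) \<longrightarrow> psi y \<le> psi x0"
          using psimax by (auto simp: abs_less_iff)
      qed
      then show ?thesis by simp
    qed
    have gxx0: "gxx t0 x0 \<le> 0"
    proof (rule ccontr)
      assume "\<not> gxx t0 x0 \<le> 0"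
      then obtain del where del: "del > 0" "\<And>hh. hh > 0 \<Longrightarrow> hh < del \<Longrightarrow> gx t0 x0 < gx t0 (x0 + hh)"
        using DERIV_pos_inc_right[OF conjunct2[OF datx[OF x0i]]] by force
      define h1 where "h1 = min del (a - x0) / 2"
      have h1p: "h1 > 0" "h1 < del" "x0 + h1 < a" using del x0i by (auto simp: h1_def min_def field_simps)
      obtain z where z: "x0 < z" "z < x0 + h1" "psi (x0 + h1) - psi x0 = (x0 + h1 - x0) * (gx t0 z - K * E * e)"
        using MVT2[of x0 "x0 + h1" psi "\<lambda>y. gx t0 y - K * E * e"] psider h1p x0i by force
      have "gx t0 z > gx t0 x0" using del(2)[of "z - x0"] z h1p by auto
      then have "psi (x0 + h1) - psi x0 > 0" using z(3) gx0 h1p by simp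
      moreover have "psi (x0 + h1) \<le> psi x0" using psimax h1p x0i by auto
      ultimately show False by simp
    qed
    obtain t2 where t2: "t1 < t2" "ereal t2 < T" using ereal_dense2[OF t1(2)] by auto
    have "at t0 within {s. 0 \<le> s \<and> ereal s < T} = at t0"
    proof (rule at_within_open_subset[of _ "{0<..<t2}"])
      show "{0<..<t2} \<subseteq> {s. 0 \<le> s \<and> ereal s < T}"
        using t2 by auto (meson ereal_less_eq(3) less_imp_le order_le_less_trans)
    qed (use t0p t0r t2 in auto)
    moreover have "((\<lambda>s. g s x0) has_real_derivative gt t0 x0) (at t0 within {s. 0 \<le> s \<and> ereal s < T})"
      using deriv[OF t0r(1) t0T x0r] by blast
    ultimately have dt: "((\<lambda>s. g s x0) has_real_derivative gt t0 x0) (at t0)"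
      by simp
    define chi where "chi = (\<lambda>s. g s x0 - (c + K * exp (B * s) * d x0))"
    have chider: "(chi has_real_derivative (gt t0 x0 - K * (exp (B * t0) * B) * d x0)) (at t0)"
      unfolding chi_def using dt by (auto intro!: derivative_eq_intros)
    have gt0: "gt t0 x0 \<ge> K * B * E * d x0"
    proof (rule ccontr)
      assume "\<not> gt t0 x0 \<ge> K * B * E * d x0"
      then have "gt t0 x0 - K * (exp (B * t0) * B) * d x0 < 0" unfolding E_def
        by (simp add: algebra_simps)
      then obtain del where del: "del > 0" "\<And>hh. hh > 0 \<Longrightarrow> hh < del \<Longrightarrow> chi t0 < chi (t0 - hh)"
        using DERIV_neg_dec_left[OF chider] by force
      define h1 where "h1 = min del t0 / 2"
      have h1p: "h1 > 0" "h1 < del" "t0 - h1 \<ge> 0" using del t0p by (auto simp: h1_def)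
      have "chi t0 < chi (t0 - h1)" using del h1p by auto
      moreover have "chi (t0 - h1) \<le> chi t0" using hmax[of "t0 - h1" x0] h1p t0r x0r
        unfolding chi_def E_def by auto
      ultimately show False by simp
    qed
    have eq: "gt t0 x0 = w x0 * (gxx t0 x0 / (1 + (gx t0 x0)\<^sup>2)
                        + (real n - 1) * (x0 * gx t0 x0 - g t0 x0) / (x0\<^sup>2 + (g t0 x0)\<^sup>2))"
      using deriv[OF t0r(1) t0T x0r] by simp
    have w0: "w x0 > 0" using wpos x0i by simp
    have n1: "real n - 1 \<ge> 0" using n by simp
    have "gxx t0 x0 / (1 + (gx t0 x0)\<^sup>2) \<le> 0" using gxx0
      by (simp add: divide_nonpos_pos add_pos_nonneg)
    moreover have "(x0 * gx t0 x0 - g t0 x0) / (x0\<^sup>2 + (g t0 x0)\<^sup>2) \<le> K * E + 1"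
    proof -
      have "\<bar>gx t0 x0\<bar> \<le> K * E" using gx0 e K E1
        by (simp add: abs_mult)
      then show ?thesis using frac_bound[of x0 "gx t0 x0" "g t0 x0"] x0r by linarith
    qed
    ultimately have "gxx t0 x0 / (1 + (gx t0 x0)\<^sup>2)
                        + (real n - 1) * (x0 * gx t0 x0 - g t0 x0) / (x0\<^sup>2 + (g t0 x0)\<^sup>2)
            \<le> (real n - 1) * (K * E + 1)"
      using n1 by (smt (verit) mult_left_mono times_divide_eq_right)
    then have "gt t0 x0 \<le> w x0 * ((real n - 1) * (K * E + 1))"
      using eq w0 by (simp add: mult_left_mono)
    also have "\<dots> \<le> C * d x0 * ((real n - 1) * (K * E + 1))"
      using wle[OF x0i] n1 K E1 by (intro mult_right_mono) auto
    finally have ineq: "K * B * E * d x0 \<le> C * d x0 * ((real n - 1) * (K * E + 1))"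
      using gt0 by linarith
    define N where "N = C * (real n - 1)"
    define P where "P = K * E"
    have N0: "N \<ge> 0" using C n1 by (simp add: N_def)
    have P1: "P \<ge> 1" using K E1 by (simp add: P_def) (smt (verit) mult_le_cancel_left1)
    have dp: "d x0 > 0" using dpos x0i by simp
    have "K * B * E * d x0 = 2 * N * P * d x0 + P * d x0"
      by (simp add: B N_def P_def algebra_simps)
    moreover have "C * d x0 * ((real n - 1) * (K * E + 1)) = N * P * d x0 + N * d x0"
      by (simp add: N_def P_def algebra_simps)
    moreover have "N * d x0 \<le> N * P * d x0"
    proof -
      have "N * d x0 \<ge> 0" using N0 dp by simp
      then have "N * d x0 * 1 \<le> N * d x0 * P" using P1 by (metis mult_left_mono)
      then show ?thesis by (simp add: algebra_simps)
    qed
    moreover have "N * P * d x0 \<ge> 0" using N0 P1 dp by simp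
    moreover have "P * d x0 > 0" using P1 dp by simp
    ultimately show False using ineq by linarith
  qed
  have "(t1, x) \<in> D" using t1 x by (auto simp: D_def)
  then have "h (t1, x) \<le> 0" using zmax hz0 by fastforce
  then show ?thesis by (simp add: h_def)
qed


lemma cbound:
  fixes h :: "real \<Rightarrow> real"
  assumes "continuous_on {lo..hi} h"
  shows "\<exists>M\<ge>0. \<forall>x\<in>{lo..hi}. \<bar>h x\<bar> \<le> M"
proof -
  have "bounded (h ` {lo..hi})"
    by (rule compact_imp_bounded[OF compact_continuous_image[OF assms compact_Icc]])
  then obtain M where "\<forall>y\<in>h ` {lo..hi}. norm y \<le> M" by (auto simp: bounded_iff)
  then show ?thesis by (intro exI[of _ "max M 0"]) auto
qed

theorem proposition4p1:
  fixes n :: nat and a p q :: real and T :: ereal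
    and w w' :: "real \<Rightarrow> real" and f fx fxx ft :: "real \<Rightarrow> real \<Rightarrow> real"
  assumes "n \<ge> 2" and "a > 1" and "T > 0"
    and "legendre_weight a w w'"
    and "lbmcf_solution n a w p q T f fx fxx ft"
  shows "\<exists>A B. \<forall>t. 0 \<le> t \<and> ereal t < T \<longrightarrow> \<bar>fx t 1\<bar> + \<bar>fx t a\<bar> \<le> A * exp (B * t)"
proof -
  note a1 = \<open>a > 1\<close>
  have n1: "n \<ge> 1" using assms(1) by simp
  have wder: "\<And>x. x \<in> {1..a} \<Longrightarrow> (w has_real_derivative w' x) (at x within {1..a})"
    and w'c: "continuous_on {1..a} w'"
    and wpos: "\<And>x. 1 < x \<Longrightarrow> x < a \<Longrightarrow> w x > 0"
    and w1: "w 1 = 0" and wa: "w a = 0"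
    using assms(4) unfolding legendre_weight_def by auto
  have sol: "((\<lambda>y. f t y) has_real_derivative fx t x) (at x within {1..a}) \<and>
        ((\<lambda>y. fx t y) has_real_derivative fxx t x) (at x within {1..a}) \<and>
        ((\<lambda>s. f s x) has_real_derivative ft t x) (at t within {s. 0 \<le> s \<and> ereal s < T}) \<and>
        ft t x = w x * (fxx t x / (1 + (fx t x)\<^sup>2)
                        + (real n - 1) * (x * fx t x - f t x) / (x\<^sup>2 + (f t x)\<^sup>2))"
    if "0 \<le> t" "ereal t < T" "1 \<le> x" "x \<le> a" for t x
  proof -
    have mem: "(t, x) \<in> flow_dom T a" using that by (simp add: flow_dom_def)
    have "case (t, x) of (t, x) \<Rightarrow>
        ((\<lambda>y. f t y) has_real_derivative fx t x) (at x within {1..a}) \<and>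
        ((\<lambda>y. fx t y) has_real_derivative fxx t x) (at x within {1..a}) \<and>
        ((\<lambda>s. f s x) has_real_derivative ft t x) (at t within {s. 0 \<le> s \<and> ereal s < T}) \<and>
        ft t x = w x * (fxx t x / (1 + (fx t x)\<^sup>2)
                        + (real n - 1) * (x * fx t x - f t x) / (x\<^sup>2 + (f t x)\<^sup>2))"
      by (rule bspec[OF conjunct1[OF assms(5)[unfolded lbmcf_solution_def]] mem])
    then show ?thesis unfolding prod.case .
  qed
  have fc: "continuous_on (flow_dom T a) (\<lambda>(t, x). f t x)"
    and fxc: "continuous_on (flow_dom T a) (\<lambda>(t, x). fx t x)"
    and bdry: "\<And>t. 0 \<le> t \<Longrightarrow> ereal t < T \<Longrightarrow> f t 1 = q \<and> f t a = p"
    using assms(5) unfolding lbmcf_solution_def by auto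
  have solm: "\<And>t x. 0 \<le> t \<Longrightarrow> ereal t < T \<Longrightarrow> 1 \<le> x \<Longrightarrow> x \<le> a \<Longrightarrow>
        ((\<lambda>y. - f t y) has_real_derivative - fx t x) (at x within {1..a}) \<and>
        ((\<lambda>y. - fx t y) has_real_derivative - fxx t x) (at x within {1..a}) \<and>
        ((\<lambda>s. - f s x) has_real_derivative - ft t x) (at t within {s. 0 \<le> s \<and> ereal s < T}) \<and>
        - ft t x = w x * (- fxx t x / (1 + (- fx t x)\<^sup>2)
                        + (real n - 1) * (x * - fx t x - - f t x) / (x\<^sup>2 + (- f t x)\<^sup>2))"
  proof -
    fix t x assume h: "0 \<le> t" "ereal t < T" "1 \<le> x" "x \<le> a"
    note s = sol[OF h]
    have e1: "((\<lambda>y. - f t y) has_real_derivative - fx t x) (at x within {1..a})"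
      using s by (intro DERIV_minus) blast
    have e2: "((\<lambda>y. - fx t y) has_real_derivative - fxx t x) (at x within {1..a})"
      using s by (intro DERIV_minus) blast
    have e3: "((\<lambda>s. - f s x) has_real_derivative - ft t x) (at t within {s. 0 \<le> s \<and> ereal s < T})"
      using s by (intro DERIV_minus) blast
    have e4: "ft t x = w x * (fxx t x / (1 + (fx t x)\<^sup>2)
                        + (real n - 1) * (x * fx t x - f t x) / (x\<^sup>2 + (f t x)\<^sup>2))"
      using s by blast
    have ng: "\<And>W A P m Y Z :: real. - (W * (A / P + m * Y / Z)) = W * ((- A) / P + m * (- Y) / Z)"
      by (simp add: algebra_simps)
    have e5: "- ft t x = w x * (- fxx t x / (1 + (- fx t x)\<^sup>2)
                        + (real n - 1) * (x * - fx t x - - f t x) / (x\<^sup>2 + (- f t x)\<^sup>2))"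
      unfolding e4 ng power2_minus by (simp add: algebra_simps)
    show "?thesis t x" using e1 e2 e3 e5 by blast
  qed
  have fcm: "continuous_on (flow_dom T a) (\<lambda>(t, x). - f t x)"
    using continuous_on_minus[OF fc] by (simp add: case_prod_beta')
  have T0: "ereal 0 < T" using assms(3) by (simp add: zero_ereal_def)
  obtain C where C: "C \<ge> 0" "\<And>x. x \<in> {1..a} \<Longrightarrow> \<bar>w' x\<bar> \<le> C"
    using cbound[OF w'c] by blast
  have wle1: "w x \<le> C * (x - 1)" if "1 < x" "x < a" for x
    using lip_bound[OF wder C(2), of 1 x] that w1 by auto
  have wlea: "w x \<le> C * (a - x)" if "1 < x" "x < a" for x
    using lip_bound[OF wder C(2), of x a] that wa by auto
  have "continuous_on {1..a} (\<lambda>x. fx 0 x)"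
  proof -
    have "continuous_on {1..a} (\<lambda>x. (0::real, x))" by (intro continuous_intros)
    moreover have "(\<lambda>x. (0::real, x)) ` {1..a} \<subseteq> flow_dom T a"
      using T0 by (auto simp: flow_dom_def)
    ultimately have "continuous_on {1..a} ((\<lambda>(t, x). fx t x) \<circ> (\<lambda>x. (0::real, x)))"
      by (intro continuous_on_compose continuous_on_subset[OF fxc])
    then show ?thesis by (simp add: o_def)
  qed
  then obtain M0 where M0: "M0 \<ge> 0" "\<And>x. x \<in> {1..a} \<Longrightarrow> \<bar>fx 0 x\<bar> \<le> M0"
    using cbound by blast
  have f0der: "\<And>x. x \<in> {1..a} \<Longrightarrow> ((\<lambda>y. f 0 y) has_real_derivative fx 0 x) (at x within {1..a})"
    using sol[OF _ T0] by auto
  have f0q: "f 0 1 = q" and f0p: "f 0 a = p" using bdry[OF _ T0] by auto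
  have in1: "\<bar>f 0 x - q\<bar> \<le> M0 * (x - 1)" if "1 \<le> x" "x \<le> a" for x
    using lip_bound[OF f0der M0(2), of 1 x] that f0q by auto
  have ina: "\<bar>f 0 x - p\<bar> \<le> M0 * (a - x)" if "1 \<le> x" "x \<le> a" for x
    using lip_bound[OF f0der M0(2), of x a] that f0p by (auto simp: abs_minus_commute)
  define K where "K = 1 + M0 + (\<bar>p\<bar> + \<bar>q\<bar>) / (a - 1)"
  define B where "B = 2 * C * (real n - 1) + 1"
  have K1: "K \<ge> 1" using M0 a1 by (simp add: K_def)
  have KM: "K \<ge> M0" using a1 by (simp add: K_def)
  have B0: "B \<ge> 0" using C n1 by (simp add: B_def)
  have Kpq: "K * exp (B * s) * (a - 1) \<ge> \<bar>p\<bar> + \<bar>q\<bar>" if "s \<ge> 0" for s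
  proof -
    have "exp (B * s) \<ge> 1" using B0 that by simp
    then have "K * exp (B * s) * (a - 1) \<ge> K * (a - 1)" using K1 a1 by simp
    moreover have "K * (a - 1) \<ge> \<bar>p\<bar> + \<bar>q\<bar>"
    proof -
      have "K * (a - 1) = (1 + M0) * (a - 1) + (\<bar>p\<bar> + \<bar>q\<bar>)"
        using a1 by (simp add: K_def distrib_right del: times_divide_eq_left) (simp add: field_simps)
      then show ?thesis using M0 a1 by simp
    qed
    ultimately show ?thesis by linarith
  qed
  have i1: "K * (x - 1) \<ge> M0 * (x - 1)" if "1 \<le> x" for x using KM that by (simp add: mult_right_mono)
  have ia: "K * (a - x) \<ge> M0 * (a - x)" if "x \<le> a" for x using KM that by (simp add: mult_right_mono)
  have dd1: "\<And>x. ((\<lambda>x. x - 1) has_real_derivative 1) (at x)" by (auto intro!: derivative_eq_intros)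
  have dda: "\<And>x. ((\<lambda>x. a - x) has_real_derivative -1) (at x)" by (auto intro!: derivative_eq_intros)
  show ?thesis
  proof (rule exI[of _ "2 * K"], rule exI[of _ B], intro allI impI)
    fix t assume t: "0 \<le> t \<and> ereal t < T"
    then have t0: "0 \<le> t" and tT: "ereal t < T" by auto
    have sT: "ereal s < T" if "s \<le> t" for s using tT that
      by (meson ereal_less_eq(3) order_le_less_trans)
    define E where "E = exp (B * t)"
    have fb: "f s 1 = q" "f s a = p" if "0 \<le> s" "s \<le> t" for s using bdry[OF that(1) sT[OF that(2)]] by auto
    have kp: "\<bar>p\<bar> + \<bar>q\<bar> \<le> K * exp (B * s) * (a - 1)" if "0 \<le> s" "s \<le> t" for s using Kpq that(1) by simp
    have c1a: "f s 1 \<le> q + K * exp (B * s) * (1 - 1)" if "0 \<le> s" "s \<le> t" for s using fb[OF that] by simp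
    have c1b: "f s a \<le> q + K * exp (B * s) * (a - 1)" if "0 \<le> s" "s \<le> t" for s
      using fb[OF that] kp[OF that] by linarith
    have c1c: "f 0 x \<le> q + K * (x - 1)" if "1 \<le> x" "x \<le> a" for x
      using in1[OF that] i1[OF that(1)] by linarith
    have c2a: "- f s 1 \<le> - q + K * exp (B * s) * (1 - 1)" if "0 \<le> s" "s \<le> t" for s using fb[OF that] by simp
    have c2b: "- f s a \<le> - q + K * exp (B * s) * (a - 1)" if "0 \<le> s" "s \<le> t" for s
      using fb[OF that] kp[OF that] by linarith
    have c2c: "- f 0 x \<le> - q + K * (x - 1)" if "1 \<le> x" "x \<le> a" for x
      using in1[OF that] i1[OF that(1)] by linarith
    have c3a: "f s 1 \<le> p + K * exp (B * s) * (a - 1)" if "0 \<le> s" "s \<le> t" for s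
      using fb[OF that] kp[OF that] by linarith
    have c3b: "f s a \<le> p + K * exp (B * s) * (a - a)" if "0 \<le> s" "s \<le> t" for s using fb[OF that] by simp
    have c3c: "f 0 x \<le> p + K * (a - x)" if "1 \<le> x" "x \<le> a" for x
      using ina[OF that] ia[OF that(2)] by linarith
    have c4a: "- f s 1 \<le> - p + K * exp (B * s) * (a - 1)" if "0 \<le> s" "s \<le> t" for s
      using fb[OF that] kp[OF that] by linarith
    have c4b: "- f s a \<le> - p + K * exp (B * s) * (a - a)" if "0 \<le> s" "s \<le> t" for s using fb[OF that] by simp
    have c4c: "- f 0 x \<le> - p + K * (a - x)" if "1 \<le> x" "x \<le> a" for x
      using ina[OF that] ia[OF that(2)] by linarith
    have up1: "f t x \<le> q + K * E * (x - 1)" if "1 \<le> x" "x \<le> a" for x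
      unfolding E_def
      by (rule core[where g=f and gx=fx and gxx=fxx and gt=ft and w=w and d="\<lambda>x. x - 1" and e=1
            and C=C and T=T and n=n and c=q, OF a1 t0 tT sol fc n1 wpos wle1 _ dd1 _ K1 C(1) B_def c1a c1b c1c that])
         auto
    have lo1: "- f t x \<le> - q + K * E * (x - 1)" if "1 \<le> x" "x \<le> a" for x
      unfolding E_def
      by (rule core[where g="\<lambda>s y. - f s y" and gx="\<lambda>s y. - fx s y" and gxx="\<lambda>s y. - fxx s y"
            and gt="\<lambda>s y. - ft s y" and w=w and d="\<lambda>x. x - 1" and e=1
            and C=C and T=T and n=n and c="-q", OF a1 t0 tT solm fcm n1 wpos wle1 _ dd1 _ K1 C(1) B_def c2a c2b c2c that])
         auto
    have upa: "f t x \<le> p + K * E * (a - x)" if "1 \<le> x" "x \<le> a" for x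
      unfolding E_def
      by (rule core[where g=f and gx=fx and gxx=fxx and gt=ft and w=w and d="\<lambda>x. a - x" and e="-1"
            and C=C and T=T and n=n and c=p, OF a1 t0 tT sol fc n1 wpos wlea _ dda _ K1 C(1) B_def c3a c3b c3c that])
         auto
    have loa: "- f t x \<le> - p + K * E * (a - x)" if "1 \<le> x" "x \<le> a" for x
      unfolding E_def
      by (rule core[where g="\<lambda>s y. - f s y" and gx="\<lambda>s y. - fx s y" and gxx="\<lambda>s y. - fxx s y"
            and gt="\<lambda>s y. - ft s y" and w=w and d="\<lambda>x. a - x" and e="-1"
            and C=C and T=T and n=n and c="-p", OF a1 t0 tT solm fcm n1 wpos wlea _ dda _ K1 C(1) B_def c4a c4b c4c that])
         auto
    have ft1: "f t 1 = q" and fta: "f t a = p" using bdry[OF t0 tT] by auto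
    have a1': "1 \<le> a" using a1 by simp
    have d1: "((\<lambda>y. f t y) has_real_derivative fx t 1) (at 1 within {1..a})"
      using sol[OF t0 tT order_refl a1'] by blast
    have da: "((\<lambda>y. f t y) has_real_derivative fx t a) (at a within {1..a})"
      using sol[OF t0 tT a1' order_refl] by blast
    have b1: "\<bar>f t x - f t 1\<bar> \<le> K * E * (x - 1)" if "1 < x" "x \<le> a" for x
    proof -
      have x1: "1 \<le> x" using that by simp
      show ?thesis unfolding abs_le_iff using up1[OF x1 that(2)] lo1[OF x1 that(2)] ft1
        by (intro conjI) linarith+
    qed
    have ba: "\<bar>f t x - f t a\<bar> \<le> K * E * (a - x)" if "1 \<le> x" "x < a" for x
    proof -
      have x1: "x \<le> a" using that by simp
      show ?thesis unfolding abs_le_iff using upa[OF that(1) x1] loa[OF that(1) x1] fta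
        by (intro conjI) linarith+
    qed
    have "\<bar>fx t 1\<bar> \<le> K * E"
      by (rule endpoint_right[where g="\<lambda>y. f t y" and hi=a, OF d1 a1 b1])
    moreover have "\<bar>fx t a\<bar> \<le> K * E"
      by (rule endpoint_left[where g="\<lambda>y. f t y" and lo=1, OF da a1 ba])
    ultimately show "\<bar>fx t 1\<bar> + \<bar>fx t a\<bar> \<le> 2 * K * exp (B * t)" unfolding E_def by simp
  qed
qed

end
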